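(* Let $a<b$ be real numbers and define a sequence $(x_n)_{n\in\mathbb{N}}$ by, for $k\in\mathbb{N}$: $x_{4k-3}=a-2^{-k}$, $x_{4k-2}=b+2^{-k}$, $x_{4k-1}=a-3^{-k}$, $x_{4k}=b+3^{-k}$. Let $X=\{a,b\}\cup\{x_n:n\in\mathbb{N}\}\subset\mathbb{R}$ with the Euclidean metric, and define $T\colon X\to X$ by $T(x_n)=x_{n+1}$ for $n\geqslant1$, $T(a)=b$, $T(b)=a$. Then $T$ is continuous, $T$ is a graphic contraction of order $4$ (the defining inequality holds with any $\alpha\in[\tfrac12,1)$), $T$ is not a graphic contraction of order $1$, $2$ or $3$, and $a,b$ are periodic points of $T$ of prime period $2$.
   Context: Let $(X,d)$ be a nonempty metric space and $n\in\mathbb{N}$. A mapping $T\colon X\to X$ is a graphic contraction of order $n$ if there exists $\alpha\in(0,1)$ such that $d(T^n x,T^{2n}x)\leqslant \alpha\, d(x,T^n x)$ for all $x\in X$, where $T^k$ denotes the $k$-th iterate of $T$. A point $x$ is a periodic point of period $m$ if $T^m x=x$; the least such positive $m$ is its prime period. *)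

theory Defs
  imports "HOL-Analysis.Analysis"
begin

definition graphic_contraction :: "'a::metric_space set \<Rightarrow> ('a \<Rightarrow> 'a) \<Rightarrow> nat \<Rightarrow> bool" where
  "graphic_contraction X T n \<longleftrightarrow>
     (\<exists>\<alpha>::real. 0 < \<alpha> \<and> \<alpha> < 1 \<and>
        (\<forall>x\<in>X. dist ((T ^^ n) x) ((T ^^ (2 * n)) x) \<le> \<alpha> * dist x ((T ^^ n) x)))"

definition periodic_point :: "('a \<Rightarrow> 'a) \<Rightarrow> 'a \<Rightarrow> nat \<Rightarrow> bool" where
  "periodic_point T x m \<longleftrightarrow> (T ^^ m) x = x"

definition prime_period :: "('a \<Rightarrow> 'a) \<Rightarrow> 'a \<Rightarrow> nat \<Rightarrow> bool" where
  "prime_period T x m \<longleftrightarrow> 0 < m \<and> periodic_point T x m \<and>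
     (\<forall>j. 0 < j \<and> j < m \<longrightarrow> \<not> periodic_point T x j)"

text \<open>The sequence x_n (n \<ge> 1): with k = (n+3) div 4,
  x_{4k-3} = a - 2^-k, x_{4k-2} = b + 2^-k, x_{4k-1} = a - 3^-k, x_{4k} = b + 3^-k.
  The value at n = 0 is irrelevant and never used.\<close>
definition xseq :: "real \<Rightarrow> real \<Rightarrow> nat \<Rightarrow> real" where
  "xseq a b n = (let k = (n + 3) div 4 in
      if n mod 4 = 1 then a - (1/2) ^ k
      else if n mod 4 = 2 then b + (1/2) ^ k
      else if n mod 4 = 3 then a - (1/3) ^ k
      else b + (1/3) ^ k)"

end

theory Submission
  imports Defs
begin

lemma x1: "xseq a b (4*k+1) = a - (1/2)^(k+1)"
proof -
  have "(4*k+1) mod 4 = (1 mod 4::nat)" "(4*k+1+3) div 4 = k+1" by presburger+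
  then show ?thesis unfolding xseq_def Let_def by simp
qed
lemma x2: "xseq a b (4*k+2) = b + (1/2)^(k+1)"
proof -
  have "(4*k+2) mod 4 = (2 mod 4::nat)" "(4*k+2+3) div 4 = k+1" by presburger+
  then show ?thesis unfolding xseq_def Let_def by simp
qed
lemma x3: "xseq a b (4*k+3) = a - (1/3)^(k+1)"
proof -
  have "(4*k+3) mod 4 = (3 mod 4::nat)" "(4*k+3+3) div 4 = k+1" by presburger+
  then show ?thesis unfolding xseq_def Let_def by simp
qed
lemma x4: "xseq a b (4*k+4) = b + (1/3)^(k+1)"
proof -
  have "(4*k+4) mod 4 = (4 mod 4::nat)" "(4*k+4+3) div 4 = k+1" by presburger+
  then show ?thesis unfolding xseq_def Let_def by simp
qed

lemma ncases: "(n::nat) \<ge> 1 \<Longrightarrow> \<exists>k. n = 4*k+1 \<or> n = 4*k+2 \<or> n = 4*k+3 \<or> n = 4*k+4"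
  by presburger

lemma third_le_half: "(1/3::real)^k \<le> (1/2)^k"
  by (rule power_mono) auto

lemma xbound:
  assumes "m \<ge> 1" "(1/2::real)^K < r" "m > 4*K"
  shows "\<bar>xseq a b m - a\<bar> < r \<or> \<bar>xseq a b m - b\<bar> < r"
proof -
  obtain k where k: "m = 4*k+1 \<or> m = 4*k+2 \<or> m = 4*k+3 \<or> m = 4*k+4"
    using ncases assms(1) by blast
  have "K < k+1" using k assms(3) by auto
  then have h: "(1/2::real)^(k+1) < r"
    using assms(2) power_decreasing[of K "k+1" "1/2::real"] by simp
  have h3: "(1/3::real)^(k+1) < r" using h third_le_half[of "k+1"] by linarith
  show ?thesis using k h h3 x1 x2 x3 x4 by auto
qed

lemma xne:
  assumes "a < b" "n \<ge> 1"
  shows "xseq a b n \<noteq> a \<and> xseq a b n \<noteq> b"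
proof -
  obtain k where k: "n = 4*k+1 \<or> n = 4*k+2 \<or> n = 4*k+3 \<or> n = 4*k+4"
    using ncases assms(2) by blast
  have p: "(1/2::real)^(k+1) > 0" "(1/3::real)^(k+1) > 0" by auto
  show ?thesis using k p x1 x2 x3 x4 assms(1) by fastforce
qed

lemma isolated:
  assumes "a < b" "m \<ge> 1"
  shows "\<exists>d>0. \<forall>y \<in> {a,b} \<union> {xseq a b n | n. n \<ge> 1}. dist y (xseq a b m) < d \<longrightarrow> y = xseq a b m"
proof -
  define z where "z = xseq a b m"
  have za: "z \<noteq> a" "z \<noteq> b" using xne[OF assms] z_def by auto
  define r where "r = min \<bar>z-a\<bar> \<bar>z-b\<bar> / 2"
  have r: "r > 0" using za r_def by auto
  obtain K where K: "(1/2::real)^K < r" using real_arch_pow_inv[OF r, of "1/2"] by auto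
  define F where "F = xseq a b ` {1..4*K}"
  have "finite F" unfolding F_def by auto
  then obtain d0 where d0: "d0 > 0" "\<forall>x\<in>F. x \<noteq> z \<longrightarrow> d0 \<le> dist z x"
    using finite_set_avoid[of F z] by blast
  define d where "d = min d0 r"
  have "d > 0" using d0 r d_def by auto
  moreover have "y = z" if y: "y \<in> {a,b} \<union> {xseq a b n | n. n \<ge> 1}" "dist y z < d" for y
  proof -
    have yr: "\<bar>y - z\<bar> < r" using y(2) d_def by (auto simp: dist_real_def)
    have ra: "r \<le> \<bar>z-a\<bar>/2" "r \<le> \<bar>z-b\<bar>/2" using r_def by auto
    have "y \<noteq> a" using yr ra r by (auto simp: abs_minus_commute)
    moreover have "y \<noteq> b" using yr ra r by (auto simp: abs_minus_commute)
    ultimately obtain n where n: "n \<ge> 1" "y = xseq a b n" using y(1) by auto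
    show "y = z"
    proof (cases "n \<le> 4*K")
      case True
      then have "y \<in> F" using n F_def by auto
      then show ?thesis using d0 y(2) d_def by (force simp: dist_commute)
    next
      case False
      then have "\<bar>y - a\<bar> < r \<or> \<bar>y - b\<bar> < r" using xbound[OF n(1) K] n(2) by auto
      moreover have "\<bar>z - a\<bar> \<le> \<bar>y - z\<bar> + \<bar>y - a\<bar>" "\<bar>z - b\<bar> \<le> \<bar>y - z\<bar> + \<bar>y - b\<bar>" by arith+
      ultimately have False using yr ra by (elim disjE) linarith+
      then show ?thesis ..
    qed
  qed
  ultimately show ?thesis unfolding z_def by blast
qed

lemma x5: "xseq a b (4*k+5) = a - (1/2)^(k+2)"
  using x1[of a b "k+1"] by (simp add: algebra_simps)

lemma shift4:
  assumes "n \<ge> 1"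
  shows "\<exists>q::real. 0 \<le> q \<and> q \<le> 1/2 \<and>
    xseq a b (n+4) - xseq a b (n+8) = q * (xseq a b n - xseq a b (n+4))"
proof -
  obtain k where k: "n = 4*k+1 \<or> n = 4*k+2 \<or> n = 4*k+3 \<or> n = 4*k+4"
    using ncases assms by blast
  then show ?thesis
  proof (elim disjE)
    assume n: "n = 4*k+1"
    have "n+4 = 4*(k+1)+1" "n+8 = 4*(k+2)+1" using n by auto
    then have "xseq a b (n+4) - xseq a b (n+8) = 1/2 * (xseq a b n - xseq a b (n+4))"
      using n x1[of a b k] x1[of a b "k+1"] x1[of a b "k+2"] by simp
    then show ?thesis by (intro exI[of _ "1/2"]) auto
  next
    assume n: "n = 4*k+2"
    have "n+4 = 4*(k+1)+2" "n+8 = 4*(k+2)+2" using n by auto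
    then have "xseq a b (n+4) - xseq a b (n+8) = 1/2 * (xseq a b n - xseq a b (n+4))"
      using n x2[of a b k] x2[of a b "k+1"] x2[of a b "k+2"] by (simp add: algebra_simps)
    then show ?thesis by (intro exI[of _ "1/2"]) auto
  next
    assume n: "n = 4*k+3"
    have "n+4 = 4*(k+1)+3" "n+8 = 4*(k+2)+3" using n by auto
    then have "xseq a b (n+4) - xseq a b (n+8) = 1/3 * (xseq a b n - xseq a b (n+4))"
      using n x3[of a b k] x3[of a b "k+1"] x3[of a b "k+2"] by simp
    then show ?thesis by (intro exI[of _ "1/3"]) auto
  next
    assume n: "n = 4*k+4"
    have "n+4 = 4*(k+1)+4" "n+8 = 4*(k+2)+4" using n by auto
    then have "xseq a b (n+4) - xseq a b (n+8) = 1/3 * (xseq a b n - xseq a b (n+4))"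
      using n x4[of a b k] x4[of a b "k+1"] x4[of a b "k+2"] by (simp add: algebra_simps)
    then show ?thesis by (intro exI[of _ "1/3"]) auto
  qed
qed

lemma notgc:
  assumes "z \<in> X" "dist z ((T^^m) z) < dist ((T^^m) z) ((T^^(2*m)) z)"
  shows "\<not> graphic_contraction X T m"
proof
  assume "graphic_contraction X T m"
  then obtain \<alpha> :: real where al: "0 < \<alpha>" "\<alpha> < 1"
    "dist ((T^^m) z) ((T^^(2*m)) z) \<le> \<alpha> * dist z ((T^^m) z)"
    using assms(1) unfolding graphic_contraction_def by blast
  have "\<alpha> * dist z ((T^^m) z) \<le> 1 * dist z ((T^^m) z)"
    by (rule mult_right_mono) (use al in auto)
  then show False using al assms(2) by linarith
qed

theorem mainTheorem3:
  fixes a b :: real and T :: "real \<Rightarrow> real" and X :: "real set"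
  assumes "a < b"
    and X_def: "X = {a, b} \<union> {xseq a b n | n. n \<ge> 1}"
    and T_seq: "\<And>n. n \<ge> 1 \<Longrightarrow> T (xseq a b n) = xseq a b (n + 1)"
    and T_a: "T a = b"
    and T_b: "T b = a"
  shows "T ` X \<subseteq> X
    \<and> continuous_on X T
    \<and> graphic_contraction X T 4
    \<and> (\<forall>\<alpha>::real. 1/2 \<le> \<alpha> \<and> \<alpha> < 1 \<longrightarrow>
           (\<forall>x\<in>X. dist ((T ^^ 4) x) ((T ^^ 8) x) \<le> \<alpha> * dist x ((T ^^ 4) x)))
    \<and> \<not> graphic_contraction X T 1
    \<and> \<not> graphic_contraction X T 2
    \<and> \<not> graphic_contraction X T 3
    \<and> prime_period T a 2
    \<and> prime_period T b 2"
proof -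
  have iter: "(T^^k) (xseq a b n) = xseq a b (n+k)" if "n \<ge> 1" for n k
    by (induction k) (use that T_seq in auto)
  have xin: "xseq a b n \<in> X" if "n \<ge> 1" for n using that X_def by auto
  have Xc: "y = a \<or> y = b \<or> (\<exists>k. y = xseq a b (4*k+1) \<or> y = xseq a b (4*k+2)
      \<or> y = xseq a b (4*k+3) \<or> y = xseq a b (4*k+4))" if yX: "y \<in> X" for y
  proof -
    { assume "y \<noteq> a" "y \<noteq> b"
      then obtain n where "n \<ge> 1" "y = xseq a b n" using yX X_def by auto
      then have ?thesis using ncases by blast }
    then show ?thesis by blast
  qed
  have pa: "(T^^2) a = a" "(T^^2) b = b" by (simp_all add: numeral_eq_Suc T_a T_b)
  have pa4: "(T^^4) a = a" "(T^^4) b = b" "(T^^8) a = a" "(T^^8) b = b"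
    by (simp_all add: numeral_eq_Suc T_a T_b)
  have img: "T ` X \<subseteq> X"
  proof
    fix y assume "y \<in> T ` X"
    then obtain x where x: "x \<in> X" "y = T x" by auto
    then show "y \<in> X"
    proof (cases "x = a \<or> x = b")
      case True then show ?thesis using x T_a T_b X_def by auto
    next
      case False
      then obtain n where "n \<ge> 1" "x = xseq a b n" using x X_def by auto
      then show ?thesis using x T_seq xin[of "n+1"] by auto
    qed
  qed
  have cont: "continuous_on X T"
    unfolding continuous_on_iff
  proof (intro ballI allI impI)
    fix x e assume x: "x \<in> X" and e: "(0::real) < e"
    show "\<exists>d>0. \<forall>y\<in>X. dist y x < d \<longrightarrow> dist (T y) (T x) < e"
    proof (cases "x = a")
      case xa: True
      define d where "d = min e (b - a)"
      have "d > 0" using e \<open>a < b\<close> d_def by auto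
      moreover have "dist (T y) (T x) < e" if y: "y \<in> X" "dist y x < d" for y
      proof -
        have yd: "\<bar>y - a\<bar> < d" using y(2) xa by (simp add: dist_real_def)
        have p: "(1/2::real)^(k+1) > 0" "(1/3::real)^(k+1) > 0" for k by auto
        from Xc[OF y(1)] show ?thesis
        proof (elim disjE exE)
          assume "y = a" then show ?thesis using xa e by simp
        next
          assume "y = b" then show ?thesis using yd d_def \<open>a < b\<close> by simp
        next
          fix k assume yk: "y = xseq a b (4*k+1)"
          then have "T y = xseq a b (4*k+1+1)" using T_seq[of "4*k+1"] by simp
          moreover have "4*k+1+1 = 4*k+2" by simp
          ultimately have "T y = xseq a b (4*k+2)" by (simp only:)
          then show ?thesis using yk x1 x2 yd d_def xa T_a p[of k] by (simp add: dist_real_def)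
        next
          fix k assume yk: "y = xseq a b (4*k+2)"
          then have "y - a > b - a" using x2[of a b k] p[of k] by simp
          moreover have "y - a < d" using yd by (simp add: abs_less_iff)
          ultimately show ?thesis using d_def by simp
        next
          fix k assume yk: "y = xseq a b (4*k+3)"
          then have "T y = xseq a b (4*k+3+1)" using T_seq[of "4*k+3"] by simp
          moreover have "4*k+3+1 = 4*k+4" by simp
          ultimately have "T y = xseq a b (4*k+4)" by (simp only:)
          then show ?thesis using yk x3 x4 yd d_def xa T_a p[of k] by (simp add: dist_real_def)
        next
          fix k assume yk: "y = xseq a b (4*k+4)"
          then have "y - a > b - a" using x4[of a b k] p[of k] by simp
          moreover have "y - a < d" using yd by (simp add: abs_less_iff)
          ultimately show ?thesis using d_def by simp
        qed
      qed
      ultimately show ?thesis by blast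
    next
      case xna: False
      show ?thesis
      proof (cases "x = b")
        case xb: True
        obtain K where K: "(1/2::real)^K < e" using real_arch_pow_inv[OF e, of "1/2"] by auto
        define d where "d = min (min e (b - a)) ((1/3)^K)"
        have "d > 0" using e \<open>a < b\<close> d_def by auto
        moreover have "dist (T y) (T x) < e" if y: "y \<in> X" "dist y x < d" for y
        proof -
          have yd: "\<bar>y - b\<bar> < d" using y(2) xb by (simp add: dist_real_def)
          have p: "(1/2::real)^(k+1) > 0" "(1/3::real)^(k+1) > 0" for k by auto
          from Xc[OF y(1)] show ?thesis
          proof (elim disjE exE)
            assume "y = a" then show ?thesis using yd d_def \<open>a < b\<close> by simp
          next
            assume "y = b" then show ?thesis using xb e by simp
          next
            fix k assume yk: "y = xseq a b (4*k+1)"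
            then have "b - y > b - a" using x1[of a b k] p[of k] by simp
            moreover have "b - y < d" using yd by (simp add: abs_less_iff)
            ultimately show ?thesis using d_def by simp
          next
            fix k assume yk: "y = xseq a b (4*k+2)"
            then have "T y = xseq a b (4*k+2+1)" using T_seq[of "4*k+2"] by simp
            moreover have "4*k+2+1 = 4*k+3" by simp
            ultimately have "T y = xseq a b (4*k+3)" by (simp only:)
            then show ?thesis using yk x2 x3 yd d_def xb T_b p[of k] third_le_half[of "k+1"]
              by (simp add: dist_real_def)
          next
            fix k assume yk: "y = xseq a b (4*k+3)"
            then have "b - y > b - a" using x3[of a b k] p[of k] by simp
            moreover have "b - y < d" using yd by (simp add: abs_less_iff)
            ultimately show ?thesis using d_def by simp
          next
            fix k assume yk: "y = xseq a b (4*k+4)"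
            then have "T y = xseq a b (4*k+4+1)" using T_seq[of "4*k+4"] by simp
            moreover have "4*k+4+1 = 4*k+5" by simp
            ultimately have Ty: "T y = a - (1/2)^(k+2)" using x5[of a b k] by (simp only:)
            have "(1/3::real)^(k+1) < (1/3)^K" using yk x4 yd d_def by simp
            moreover have "0 < (1/3::real)" "(1/3::real) < 1" by auto
            ultimately have "K < k+1" using power_strict_decreasing_iff[of "1/3::real" "k+1" K] by blast
            then have "(1/2::real)^(k+2) \<le> (1/2)^K"
              using power_decreasing[of K "k+2" "1/2::real"] by simp
            then show ?thesis using Ty xb T_b K p[of "k+1"] by (simp add: dist_real_def)
          qed
        qed
        ultimately show ?thesis by blast
      next
        case xnb: False
        then obtain m where m: "m \<ge> 1" "x = xseq a b m" using x xna X_def by auto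
        obtain d where d: "d > 0" "\<forall>y\<in>X. dist y x < d \<longrightarrow> y = x"
          using isolated[OF \<open>a < b\<close> m(1)] m(2) X_def by auto
        show ?thesis using d e by (intro exI[of _ d]) auto
      qed
    qed
  qed
  have ineq: "\<forall>\<alpha>::real. 1/2 \<le> \<alpha> \<and> \<alpha> < 1 \<longrightarrow>
           (\<forall>x\<in>X. dist ((T ^^ 4) x) ((T ^^ 8) x) \<le> \<alpha> * dist x ((T ^^ 4) x))"
  proof (intro allI impI ballI)
    fix \<alpha> :: real and x assume al: "1/2 \<le> \<alpha> \<and> \<alpha> < 1" and x: "x \<in> X"
    show "dist ((T ^^ 4) x) ((T ^^ 8) x) \<le> \<alpha> * dist x ((T ^^ 4) x)"
    proof (cases "x = a \<or> x = b")
      case True then show ?thesis using pa4 by auto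
    next
      case False
      then obtain n where n: "n \<ge> 1" "x = xseq a b n" using x X_def by auto
      obtain q where q: "0 \<le> q" "q \<le> 1/2"
        "xseq a b (n+4) - xseq a b (n+8) = q * (xseq a b n - xseq a b (n+4))"
        using shift4[OF n(1)] by blast
      have "dist ((T ^^ 4) x) ((T ^^ 8) x) = q * dist x ((T ^^ 4) x)"
        using q n iter by (simp add: dist_real_def abs_mult)
      also have "\<dots> \<le> \<alpha> * dist x ((T ^^ 4) x)"
        by (rule mult_right_mono) (use q al in auto)
      finally show ?thesis .
    qed
  qed
  have gc4: "graphic_contraction X T 4"
    unfolding graphic_contraction_def using ineq[rule_format, of "1/2"] by (intro exI[of _ "1/2"]) simp
  have v: "xseq a b 7 = a - 1/9" "xseq a b 8 = b + 1/9" "xseq a b 9 = a - 1/8"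
    "xseq a b 11 = a - 1/27" "xseq a b 15 = a - 1/81" "xseq a b 18 = b + 1/32"
    "xseq a b 21 = a - 1/64"
    by (simp_all add: xseq_def power_numeral_reduce)
  have n1: "\<not> graphic_contraction X T 1"
  proof (rule notgc[of "xseq a b 7"])
    show "xseq a b 7 \<in> X" by (rule xin) simp
    have i: "(T^^1) (xseq a b 7) = xseq a b 8" "(T^^(2*1)) (xseq a b 7) = xseq a b 9"
      using iter[of 7 1] iter[of 7 "2*1"] by simp_all
    show "dist (xseq a b 7) ((T^^1) (xseq a b 7)) < dist ((T^^1) (xseq a b 7)) ((T^^(2*1)) (xseq a b 7))"
      unfolding i unfolding v using \<open>a < b\<close> by (simp add: dist_real_def)
  qed
  have n2: "\<not> graphic_contraction X T 2"
  proof (rule notgc[of "xseq a b 7"])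
    show "xseq a b 7 \<in> X" by (rule xin) simp
    have i: "(T^^2) (xseq a b 7) = xseq a b 9" "(T^^(2*2)) (xseq a b 7) = xseq a b 11"
      using iter[of 7 2] iter[of 7 "2*2"] by simp_all
    show "dist (xseq a b 7) ((T^^2) (xseq a b 7)) < dist ((T^^2) (xseq a b 7)) ((T^^(2*2)) (xseq a b 7))"
      unfolding i unfolding v using \<open>a < b\<close> by (simp add: dist_real_def)
  qed
  have n3: "\<not> graphic_contraction X T 3"
  proof (rule notgc[of "xseq a b 15"])
    show "xseq a b 15 \<in> X" by (rule xin) simp
    have i: "(T^^3) (xseq a b 15) = xseq a b 18" "(T^^(2*3)) (xseq a b 15) = xseq a b 21"
      using iter[of 15 3] iter[of 15 "2*3"] by simp_all
    show "dist (xseq a b 15) ((T^^3) (xseq a b 15)) < dist ((T^^3) (xseq a b 15)) ((T^^(2*3)) (xseq a b 15))"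
      unfolding i unfolding v using \<open>a < b\<close> by (simp add: dist_real_def)
  qed
  have ppa: "prime_period T a 2"
    unfolding prime_period_def periodic_point_def
  proof (intro conjI allI impI)
    fix j :: nat assume "0 < j \<and> j < 2"
    then have "j = 1" by auto
    then show "(T^^j) a \<noteq> a" using T_a \<open>a < b\<close> by simp
  qed (use pa in auto)
  have ppb: "prime_period T b 2"
    unfolding prime_period_def periodic_point_def
  proof (intro conjI allI impI)
    fix j :: nat assume "0 < j \<and> j < 2"
    then have "j = 1" by auto
    then show "(T^^j) b \<noteq> b" using T_b \<open>a < b\<close> by simp
  qed (use pa in auto)
  show ?thesis using img cont gc4 ineq n1 n2 n3 ppa ppb by blast
qed

end
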